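(* Let $A$ be a compact Hausdorff topological algebra. Then $A$ is simple if and only if $\Delta_A=\{(a,a)\mid a\in A\}$ and $A\times A$ are the only closed congruences on $A$.
   Context: A topological algebra is an algebra (a set with finitary operations of a fixed type) equipped with a topology such that every operation is continuous. A congruence on $A$ is an equivalence relation on $A$ that is a subalgebra of $A\times A$; it is closed if it is closed in the product space $A\times A$. A Hausdorff topological algebra $A$ is called simple if every non-constant continuous homomorphism from $A$ into any Hausdorff topological algebra of the same type is injective. *)

theory Defs
  imports "HOL-Analysis.Analysis"
begin

text \<open>A type (signature) is given by an arity function ar on operation symbols 'f.  Tuples are represented as lists of length ar f; the product space is
  product_topology over the index set {..<ar f}.\<close>

definition top_algebra :: "('f \<Rightarrow> nat) \<Rightarrow> 'a topology \<Rightarrow> ('f \<Rightarrow> 'a list \<Rightarrow> 'a) \<Rightarrow> bool" where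
  "top_algebra ar T F \<longleftrightarrow>
     (\<forall>f. continuous_map (product_topology (\<lambda>_. T) {..<ar f}) T
            (\<lambda>x. F f (map x [0..<ar f])))"

definition congruence_alg :: "('f \<Rightarrow> nat) \<Rightarrow> 'a topology \<Rightarrow> ('f \<Rightarrow> 'a list \<Rightarrow> 'a) \<Rightarrow> ('a \<times> 'a) set \<Rightarrow> bool" where
  "congruence_alg ar T F \<theta> \<longleftrightarrow>
     equiv (topspace T) \<theta> \<and>
     (\<forall>f xs ys. length xs = ar f \<and> length ys = ar f \<and>
        set xs \<subseteq> topspace T \<and> set ys \<subseteq> topspace T \<and>
        list_all2 (\<lambda>x y. (x, y) \<in> \<theta>) xs ys \<longrightarrow> (F f xs, F f ys) \<in> \<theta>)"

definition closed_congruence :: "('f \<Rightarrow> nat) \<Rightarrow> 'a topology \<Rightarrow> ('f \<Rightarrow> 'a list \<Rightarrow> 'a) \<Rightarrow> ('a \<times> 'a) set \<Rightarrow> bool" where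
  "closed_congruence ar T F \<theta> \<longleftrightarrow>
     congruence_alg ar T F \<theta> \<and> closedin (prod_topology T T) \<theta>"

definition alg_hom :: "('f \<Rightarrow> nat) \<Rightarrow> 'a topology \<Rightarrow> ('f \<Rightarrow> 'a list \<Rightarrow> 'a) \<Rightarrow>
     'b topology \<Rightarrow> ('f \<Rightarrow> 'b list \<Rightarrow> 'b) \<Rightarrow> ('a \<Rightarrow> 'b) \<Rightarrow> bool" where
  "alg_hom ar T F U G h \<longleftrightarrow>
     h \<in> topspace T \<rightarrow> topspace U \<and>
     (\<forall>f xs. length xs = ar f \<and> set xs \<subseteq> topspace T \<longrightarrow>
        h (F f xs) = G f (map h xs))"

text \<open>Simplicity, with codomain algebras ranging over all Hausdorff topological algebras
  of the same type whose underlying type is 'b (HOL cannot quantify over types inside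
  a formula).\<close>

definition simple_alg :: "'b itself \<Rightarrow> ('f \<Rightarrow> nat) \<Rightarrow> 'a topology \<Rightarrow> ('f \<Rightarrow> 'a list \<Rightarrow> 'a) \<Rightarrow> bool" where
  "simple_alg _ ar T F \<longleftrightarrow>
     top_algebra ar T F \<and> Hausdorff_space T \<and>
     (\<forall>(U :: 'b topology) G h.
        top_algebra ar U G \<and> Hausdorff_space U \<and>
        alg_hom ar T F U G h \<and> continuous_map T U h \<and>
        (\<exists>x\<in>topspace T. \<exists>y\<in>topspace T. h x \<noteq> h y)
        \<longrightarrow> inj_on h (topspace T))"

end

theory Submission
  imports Defs
begin


definition qtop :: "'a topology \<Rightarrow> ('a \<Rightarrow> 'b) \<Rightarrow> 'b topology" where
  "qtop X q = topology (\<lambda>V. V \<subseteq> q ` topspace X \<and> openin X {x \<in> topspace X. q x \<in> V})"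

lemma istopology_qtop: "istopology (\<lambda>V. V \<subseteq> q ` topspace X \<and> openin X {x \<in> topspace X. q x \<in> V})"
proof -
  have 1: "S \<inter> T \<subseteq> q ` topspace X \<and> openin X {x \<in> topspace X. q x \<in> S \<inter> T}"
    if S: "S \<subseteq> q ` topspace X \<and> openin X {x \<in> topspace X. q x \<in> S}"
    and T: "T \<subseteq> q ` topspace X \<and> openin X {x \<in> topspace X. q x \<in> T}" for S T
  proof -
    have "{x \<in> topspace X. q x \<in> S \<inter> T} = {x \<in> topspace X. q x \<in> S} \<inter> {x \<in> topspace X. q x \<in> T}"
      by blast
    then show ?thesis
      using S T by (metis (no_types, lifting) le_infI1 openin_Int)
  qed
  have 2: "\<Union>K \<subseteq> q ` topspace X \<and> openin X {x \<in> topspace X. q x \<in> \<Union>K}"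
    if K: "\<forall>V\<in>K. V \<subseteq> q ` topspace X \<and> openin X {x \<in> topspace X. q x \<in> V}" for K
  proof -
    have "{x \<in> topspace X. q x \<in> \<Union>K} = \<Union>((\<lambda>V. {x \<in> topspace X. q x \<in> V}) ` K)"
      by blast
    moreover have "openin X (\<Union>((\<lambda>V. {x \<in> topspace X. q x \<in> V}) ` K))"
      using K by (intro openin_Union) blast
    ultimately show ?thesis
      using K by auto
  qed
  show ?thesis unfolding istopology_def using 1 2 by blast
qed

lemma openin_qtop: "openin (qtop X q) V \<longleftrightarrow> V \<subseteq> q ` topspace X \<and> openin X {x \<in> topspace X. q x \<in> V}"
  unfolding qtop_def topology_inverse'[OF istopology_qtop] ..

lemma topspace_qtop: "topspace (qtop X q) = q ` topspace X"
proof
  show "topspace (qtop X q) \<subseteq> q ` topspace X"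
    unfolding topspace_def openin_qtop by blast
  have "openin (qtop X q) (q ` topspace X)"
  proof -
    have "{x \<in> topspace X. q x \<in> q ` topspace X} = topspace X" by auto
    then show ?thesis unfolding openin_qtop by auto
  qed
  then show "q ` topspace X \<subseteq> topspace (qtop X q)" by (rule openin_subset)
qed

lemma quotient_map_qtop: "quotient_map X (qtop X q) q"
  unfolding quotient_map_def topspace_qtop openin_qtop by auto



lemma sat_open:
  assumes eq: "equiv (topspace T) \<theta>" and cl: "closedin (prod_topology T T) \<theta>"
    and hT: "Hausdorff_space T" and cT: "compact_space T" and W: "openin T W"
  shows "openin T {x \<in> topspace T. \<theta>``{x} \<subseteq> W}"
proof -
  define K where "K = topspace T - W"
  have Kc: "closedin T K" unfolding K_def using W by blast
  have sub: "\<theta> \<subseteq> topspace T \<times> topspace T" using eq by (simp add: equiv_type)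
  have "closedin (prod_topology T T) (K \<times> topspace T)"
    using Kc by (simp add: closedin_prod_Times_iff)
  then have "closedin (prod_topology T T) (\<theta> \<inter> (K \<times> topspace T))"
    using cl by blast
  moreover have "compact_space (prod_topology T T)"
    using cT by (simp add: compact_space_prod_topology)
  ultimately have "compactin (prod_topology T T) (\<theta> \<inter> (K \<times> topspace T))"
    by (simp add: closedin_compact_space)
  then have "compactin T (snd ` (\<theta> \<inter> (K \<times> topspace T)))"
    using image_compactin continuous_map_snd by blast
  then have S: "closedin T (snd ` (\<theta> \<inter> (K \<times> topspace T)))"
    using compactin_imp_closedin hT by blast
  have "{x \<in> topspace T. \<theta>``{x} \<subseteq> W} = topspace T - snd ` (\<theta> \<inter> (K \<times> topspace T))"
  proof (intro set_eqI iffI)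
    fix x assume x: "x \<in> {x \<in> topspace T. \<theta>``{x} \<subseteq> W}"
    have "x \<notin> snd ` (\<theta> \<inter> (K \<times> topspace T))"
    proof
      assume "x \<in> snd ` (\<theta> \<inter> (K \<times> topspace T))"
      then obtain k where k: "(k,x) \<in> \<theta>" "k \<in> K" by force
      then have "(x,k) \<in> \<theta>" using eq by (meson equivE symE)
      then have "k \<in> W" using x by blast
      then show False using k K_def by blast
    qed
    then show "x \<in> topspace T - snd ` (\<theta> \<inter> (K \<times> topspace T))" using x by blast
  next
    fix x assume x: "x \<in> topspace T - snd ` (\<theta> \<inter> (K \<times> topspace T))"
    have "\<theta>``{x} \<subseteq> W"
    proof
      fix y assume "y \<in> \<theta>``{x}"
      then have y: "(x,y) \<in> \<theta>" by blast
      then have "(y,x) \<in> \<theta>" using eq by (meson equivE symE)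
      moreover have "y \<in> topspace T" using y sub by blast
      ultimately show "y \<in> W"
        using x unfolding K_def by (metis (no_types, lifting) DiffI Int_iff mem_Sigma_iff DiffD1 DiffD2 image_eqI snd_conv)
    qed
    then show "x \<in> {x \<in> topspace T. \<theta>``{x} \<subseteq> W}" using x by blast
  qed
  then show ?thesis using S by (simp add: openin_diff)
qed

lemma class_closed:
  assumes eq: "equiv (topspace T) \<theta>" and cl: "closedin (prod_topology T T) \<theta>"
    and a: "a \<in> topspace T"
  shows "closedin T (\<theta>``{a})"
proof -
  have "continuous_map T (prod_topology T T) (\<lambda>y. (a,y))"
    using a by (intro continuous_map_pairedI) auto
  then have "closedin T {y \<in> topspace T. (a,y) \<in> \<theta>}"
    using cl closedin_continuous_map_preimage by fastforce
  moreover have "{y \<in> topspace T. (a,y) \<in> \<theta>} = \<theta>``{a}"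
    using eq by (auto simp: equiv_def refl_on_def)
  ultimately show ?thesis by simp
qed



lemma qtop_Hausdorff:
  assumes eq: "equiv (topspace T) \<theta>" and cl: "closedin (prod_topology T T) \<theta>"
    and hT: "Hausdorff_space T" and cT: "compact_space T"
  shows "Hausdorff_space (qtop T (\<lambda>x. \<theta>``{x}))"
  unfolding Hausdorff_space_def
proof (intro allI impI)
  fix c1 c2 assume H: "c1 \<in> topspace (qtop T (\<lambda>x. \<theta>``{x})) \<and> c2 \<in> topspace (qtop T (\<lambda>x. \<theta>``{x})) \<and> c1 \<noteq> c2"
  then obtain a b where ab: "a \<in> topspace T" "b \<in> topspace T" "c1 = \<theta>``{a}" "c2 = \<theta>``{b}"
    unfolding topspace_qtop by blast
  have ne: "\<theta>``{a} \<noteq> \<theta>``{b}" using H ab by blast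
  have dj: "disjnt (\<theta>``{a}) (\<theta>``{b})"
  proof -
    have nab: "(a,b) \<notin> \<theta>"
    proof
      assume "(a,b) \<in> \<theta>"
      then have "\<theta>``{a} = \<theta>``{b}" by (rule equiv_class_eq[OF eq])
      then show False using ne by simp
    qed
    show ?thesis unfolding disjnt_def
    proof (rule ccontr)
      assume "\<theta>``{a} \<inter> \<theta>``{b} \<noteq> {}"
      then obtain x where "(a,x) \<in> \<theta>" "(b,x) \<in> \<theta>" by blast
      moreover have "sym \<theta>" "trans \<theta>" using eq by (auto simp: equiv_def)
      ultimately have "(a,b) \<in> \<theta>" by (meson symD transD)
      then show False using nab by simp
    qed
  qed
  have norm: "normal_space T" using cT hT compact_Hausdorff_or_regular_imp_normal_space by blast
  have "\<exists>W1 W2. openin T W1 \<and> openin T W2 \<and> \<theta>``{a} \<subseteq> W1 \<and> \<theta>``{b} \<subseteq> W2 \<and> disjnt W1 W2"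
    using norm dj class_closed[OF eq cl ab(1)] class_closed[OF eq cl ab(2)]
    unfolding normal_space_def by blast
  then obtain W1 W2 where W: "openin T W1" "openin T W2" "\<theta>``{a} \<subseteq> W1" "\<theta>``{b} \<subseteq> W2" "disjnt W1 W2"
    by blast
  let ?Q = "(\<lambda>x. \<theta>``{x}) ` topspace T"
  have op: "openin (qtop T (\<lambda>x. \<theta>``{x})) {c \<in> ?Q. c \<subseteq> W}" if "openin T W" for W
  proof -
    have "{x \<in> topspace T. \<theta>``{x} \<in> {c \<in> ?Q. c \<subseteq> W}} = {x \<in> topspace T. \<theta>``{x} \<subseteq> W}"
      by blast
    then show ?thesis
      unfolding openin_qtop using sat_open[OF eq cl hT cT that] by auto
  qed
  have refl: "x \<in> \<theta>``{x}" if "x \<in> topspace T" for x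
    using eq that by (auto simp: equiv_def refl_on_def)
  show "\<exists>U V. openin (qtop T (\<lambda>x. \<theta>``{x})) U \<and> openin (qtop T (\<lambda>x. \<theta>``{x})) V \<and> c1 \<in> U \<and> c2 \<in> V \<and> disjnt U V"
  proof (intro exI conjI)
    show "openin (qtop T (\<lambda>x. \<theta>``{x})) {c \<in> ?Q. c \<subseteq> W1}" using op W(1) .
    show "openin (qtop T (\<lambda>x. \<theta>``{x})) {c \<in> ?Q. c \<subseteq> W2}" using op W(2) .
    show "c1 \<in> {c \<in> ?Q. c \<subseteq> W1}" using ab W by blast
    show "c2 \<in> {c \<in> ?Q. c \<subseteq> W2}" using ab W by blast
    show "disjnt {c \<in> ?Q. c \<subseteq> W1} {c \<in> ?Q. c \<subseteq> W2}"
      unfolding disjnt_def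
    proof (rule ccontr)
      assume "{c \<in> ?Q. c \<subseteq> W1} \<inter> {c \<in> ?Q. c \<subseteq> W2} \<noteq> {}"
      then obtain x where x: "x \<in> topspace T" "\<theta>``{x} \<subseteq> W1" "\<theta>``{x} \<subseteq> W2" by blast
      then have "x \<in> W1 \<inter> W2" using refl by blast
      then show False using W(5) unfolding disjnt_def by blast
    qed
  qed
qed



lemma F_in:
  assumes "top_algebra ar T F" "length xs = ar f" "set xs \<subseteq> topspace T"
  shows "F f xs \<in> topspace T"
proof -
  define x where "x = (\<lambda>i. if i < ar f then xs ! i else undefined)"
  have "x \<in> topspace (product_topology (\<lambda>_. T) {..<ar f})"
    using assms(2,3) by (auto simp: x_def PiE_iff extensional_def)
  moreover have "map x [0..<ar f] = xs"
    using assms(2) by (intro nth_equalityI) (auto simp: x_def)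
  ultimately show ?thesis using assms(1) unfolding top_algebra_def
    by (simp add: continuous_map_def Pi_iff) (metis (no_types, lifting))
qed

lemma kernel_part:
  fixes ar :: "'f \<Rightarrow> nat" and T :: "'a topology" and F :: "'f \<Rightarrow> 'a list \<Rightarrow> 'a"
  assumes "top_algebra ar T F" and "Hausdorff_space T"
    and triv: "\<forall>\<theta>. closed_congruence ar T F \<theta> \<longrightarrow>
                \<theta> = Id_on (topspace T) \<or> \<theta> = topspace T \<times> topspace T"
  shows "simple_alg TYPE('b) ar T F"
  unfolding simple_alg_def
proof (intro conjI assms allI impI)
  fix U :: "'b topology" and G h
  assume H: "top_algebra ar U G \<and> Hausdorff_space U \<and> alg_hom ar T F U G h \<and> continuous_map T U h \<and>
        (\<exists>x\<in>topspace T. \<exists>y\<in>topspace T. h x \<noteq> h y)"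
  define \<theta> where "\<theta> = {(x,y). x \<in> topspace T \<and> y \<in> topspace T \<and> h x = h y}"
  have hom: "\<And>f xs. length xs = ar f \<Longrightarrow> set xs \<subseteq> topspace T \<Longrightarrow> h (F f xs) = G f (map h xs)"
    using H unfolding alg_hom_def by blast
  have c: "continuous_map T U h" using H by blast
  have hU: "\<And>x. x \<in> topspace T \<Longrightarrow> h x \<in> topspace U"
    using c unfolding continuous_map_def by blast
  have cong: "congruence_alg ar T F \<theta>"
  proof -
    have e: "equiv (topspace T) \<theta>"
      unfolding \<theta>_def by (intro equivI refl_onI symI transI) auto
    have "(F f xs, F f ys) \<in> \<theta>" if a: "length xs = ar f \<and> length ys = ar f \<and> set xs \<subseteq> topspace T \<and> set ys \<subseteq> topspace T \<and>
       list_all2 (\<lambda>x y. (x, y) \<in> \<theta>) xs ys" for f xs ys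
    proof -
    have "map h xs = map h ys"
      using a by (intro nth_equalityI) (auto simp: \<theta>_def list_all2_conv_all_nth)
    moreover have "F f xs \<in> topspace T" "F f ys \<in> topspace T"
      using a F_in[OF assms(1)] by blast+
    ultimately show "(F f xs, F f ys) \<in> \<theta>"
      using a hom[of xs f] hom[of ys f] unfolding \<theta>_def by simp
    qed
    then show ?thesis using e unfolding congruence_alg_def by blast
  qed
  have "closedin (prod_topology T T) \<theta>"
  proof -
    have "continuous_map (prod_topology T T) (prod_topology U U) (\<lambda>(x,y). (h x, h y))"
    proof -
      show ?thesis unfolding case_prod_unfold
        using continuous_map_pairedI[OF continuous_map_compose[OF continuous_map_fst c, unfolded o_def]
           continuous_map_compose[OF continuous_map_snd c, unfolded o_def]] .
    qed
    moreover have "closedin (prod_topology U U) ((\<lambda>x. (x,x)) ` topspace U)"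
      using H Hausdorff_space_closedin_diagonal by blast  
    ultimately have "closedin (prod_topology T T) {z \<in> topspace (prod_topology T T). (\<lambda>(x,y). (h x, h y)) z \<in> (\<lambda>x. (x,x)) ` topspace U}"
      by (rule closedin_continuous_map_preimage)
    moreover have "{z \<in> topspace (prod_topology T T). (\<lambda>(x,y). (h x, h y)) z \<in> (\<lambda>x. (x,x)) ` topspace U} = \<theta>"
    proof -
      show ?thesis using hU unfolding \<theta>_def by auto
    qed
    ultimately show ?thesis by simp
  qed
  with cong triv have "\<theta> = Id_on (topspace T) \<or> \<theta> = topspace T \<times> topspace T"
    unfolding closed_congruence_def by blast
  moreover have "\<theta> \<noteq> topspace T \<times> topspace T"
    using H by (auto simp: \<theta>_def)
  ultimately have "\<theta> = Id_on (topspace T)" by blast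
  show "inj_on h (topspace T)"
  proof (rule inj_onI)
    fix x y assume "x \<in> topspace T" "y \<in> topspace T" "h x = h y"
    then have "(x,y) \<in> \<theta>" by (simp add: \<theta>_def)
    then have "(x,y) \<in> Id_on (topspace T)" using \<open>\<theta> = Id_on (topspace T)\<close> by simp
    then show "x = y" by blast
  qed
qed


lemma quot_alg:
  fixes ar :: "'f \<Rightarrow> nat" and T :: "'a topology" and F :: "'f \<Rightarrow> 'a list \<Rightarrow> 'a"
  assumes ta: "top_algebra ar T F" and hT: "Hausdorff_space T" and cT: "compact_space T"
    and cc: "closed_congruence ar T F \<theta>"
  shows "\<exists>(U :: 'a set topology) G h. top_algebra ar U G \<and> Hausdorff_space U \<and>
     alg_hom ar T F U G h \<and> continuous_map T U h \<and>
     (\<forall>x\<in>topspace T. \<forall>y\<in>topspace T. h x = h y \<longleftrightarrow> (x,y) \<in> \<theta>)"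
proof -
  have eq: "equiv (topspace T) \<theta>" and cl: "closedin (prod_topology T T) \<theta>"
    and cg: "\<And>f xs ys. length xs = ar f \<Longrightarrow> length ys = ar f \<Longrightarrow>
        set xs \<subseteq> topspace T \<Longrightarrow> set ys \<subseteq> topspace T \<Longrightarrow>
        list_all2 (\<lambda>x y. (x, y) \<in> \<theta>) xs ys \<Longrightarrow> (F f xs, F f ys) \<in> \<theta>"
    using cc unfolding closed_congruence_def congruence_alg_def by blast+
  define q where "q x = \<theta>``{x}" for x
  define U where "U = qtop T q"
  define rep where "rep c = (SOME x. x \<in> topspace T \<and> q x = c)" for c
  define G where "G f cs = q (F f (map rep cs))" for f cs
  have qm: "quotient_map T U q" unfolding U_def by (rule quotient_map_qtop)
  have qc: "continuous_map T U q" using qm by (rule quotient_imp_continuous_map)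
  have topU: "topspace U = q ` topspace T" unfolding U_def by (rule topspace_qtop)
  have hU: "Hausdorff_space U" unfolding U_def q_def using qtop_Hausdorff[OF eq cl hT cT] .
  have refl: "x \<in> q x" if "x \<in> topspace T" for x
    using eq that by (auto simp: q_def equiv_def refl_on_def)
  have qeq: "q x = q y \<longleftrightarrow> (x,y) \<in> \<theta>" if "x \<in> topspace T" "y \<in> topspace T" for x y
    unfolding q_def using eq_equiv_class_iff[OF eq that] .
  have rep: "rep c \<in> topspace T \<and> q (rep c) = c" if "c \<in> q ` topspace T" for c
  proof -
    have "\<exists>x. x \<in> topspace T \<and> q x = c" using that by blast
    then show ?thesis unfolding rep_def by (rule someI_ex)
  qed
  have repq: "(rep (q x), x) \<in> \<theta>" if x: "x \<in> topspace T" for x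
  proof -
    have r: "rep (q x) \<in> topspace T" "q (rep (q x)) = q x" using rep x by blast+
    then show ?thesis using qeq[OF r(1) x] by simp
  qed
  have Gq: "G f (map q xs) = q (F f xs)" if "length xs = ar f" "set xs \<subseteq> topspace T" for f xs
  proof -
    have "(F f (map rep (map q xs)), F f xs) \<in> \<theta>"
    proof (rule cg)
      show "list_all2 (\<lambda>x y. (x, y) \<in> \<theta>) (map rep (map q xs)) xs"
        using that repq by (auto simp: list_all2_conv_all_nth intro!: repq nth_mem[THEN subsetD[OF that(2)]])
      show "set (map rep (map q xs)) \<subseteq> topspace T"
        using that rep by auto
    qed (use that in auto)
    moreover have "F f (map rep (map q xs)) \<in> topspace T"
      using F_in[OF ta, of "map rep (map q xs)" f] that rep by auto
    moreover have "F f xs \<in> topspace T" using F_in[OF ta] that by blast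
    ultimately show ?thesis unfolding G_def using qeq by blast
  qed
  have hom: "alg_hom ar T F U G q"
    unfolding alg_hom_def using qc Gq
    by (auto simp: continuous_map_def)
  have tU: "top_algebra ar U G"
    unfolding top_algebra_def
  proof
    fix f
    show "continuous_map (product_topology (\<lambda>_. U) {..<ar f}) U (\<lambda>x. G f (map x [0..<ar f]))"
    proof -
      define n where "n = ar f"
      define P where "P = product_topology (\<lambda>_. T) {..<n}"
      define PU where "PU = product_topology (\<lambda>_. U) {..<n}"
      define Qm where "Qm x = restrict (\<lambda>i. q (x i)) {..<n}" for x
      have Qc: "continuous_map P PU Qm"
        unfolding PU_def continuous_map_componentwise
      proof (intro conjI ballI)
        show "Qm ` topspace P \<subseteq> extensional {..<n}" unfolding Qm_def by auto
        fix k assume k: "k \<in> {..<n}"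
        have "continuous_map P U (q \<circ> (\<lambda>x. x k))"
          unfolding P_def using continuous_map_product_projection[OF k] qc
          by (rule continuous_map_compose)
        then show "continuous_map P U (\<lambda>x. Qm x k)"
          by (rule continuous_map_eq) (use k in \<open>simp add: Qm_def\<close>)
      qed
      have Qs: "Qm ` topspace P = topspace PU"
      proof
        show "Qm ` topspace P \<subseteq> topspace PU" using Qc by (rule continuous_map_image_subset_topspace)
        show "topspace PU \<subseteq> Qm ` topspace P"
        proof
          fix c assume c: "c \<in> topspace PU"
          then have c': "c \<in> (\<Pi>\<^sub>E i\<in>{..<n}. q ` topspace T)" using topU unfolding PU_def by simp
          define x where "x = restrict (\<lambda>i. rep (c i)) {..<n}"
          have ci: "c i \<in> q ` topspace T" if "i < n" for i
            using c' that unfolding PiE_iff by blast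
          have "x \<in> topspace P" unfolding P_def x_def topspace_product_topology
            using ci rep by (simp add: PiE_iff)
          moreover have "Qm x = c"
          proof
            fix i show "Qm x i = c i"
            proof (cases "i < n")
              case True
              then show ?thesis using ci rep unfolding Qm_def x_def by simp
            next
              case False
              then have "c i = undefined" using c' unfolding PiE_iff extensional_def by simp
              then show ?thesis using False unfolding Qm_def x_def by simp
            qed
          qed
          ultimately show "c \<in> Qm ` topspace P" by blast
        qed
      qed
      have cP: "compact_space P"
        unfolding P_def using cT by (simp add: compact_space_product_topology)
      have hPU: "Hausdorff_space PU"
        unfolding PU_def using hU by (simp add: Hausdorff_space_product_topology)
      have Qq: "quotient_map P PU Qm"
        using Qc cP hPU Qs by (rule continuous_imp_quotient_map)
      have Fc: "continuous_map P T (\<lambda>x. F f (map x [0..<n]))"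
        using ta unfolding top_algebra_def P_def n_def by blast
      have "continuous_map P U (q \<circ> (\<lambda>x. F f (map x [0..<n])))"
        using Fc qc by (rule continuous_map_compose)
      then have "continuous_map P U ((\<lambda>c. G f (map c [0..<n])) \<circ> Qm)"
      proof (rule continuous_map_eq)
        fix x assume x: "x \<in> topspace P"
        have xi: "x i \<in> topspace T" if "i < n" for i
          using x that unfolding P_def topspace_product_topology PiE_iff by blast
        have xs: "set (map x [0..<n]) \<subseteq> topspace T" using xi by auto
        have mq: "map (Qm x) [0..<n] = map q (map x [0..<n])" unfolding Qm_def by simp
        have "G f (map (Qm x) [0..<n]) = G f (map q (map x [0..<n]))" using mq by (rule arg_cong)
        also have "\<dots> = q (F f (map x [0..<n]))"
          by (rule Gq) (use xs in \<open>simp_all add: n_def\<close>)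
        finally show "(q \<circ> (\<lambda>x. F f (map x [0..<n]))) x = ((\<lambda>c. G f (map c [0..<n])) \<circ> Qm) x"
          by simp
      qed
      then have "continuous_map PU U (\<lambda>c. G f (map c [0..<n]))"
        using Qq continuous_compose_quotient_map by blast
      then show ?thesis unfolding PU_def n_def .
    qed
  qed
  have "\<forall>x\<in>topspace T. \<forall>y\<in>topspace T. q x = q y \<longleftrightarrow> (x,y) \<in> \<theta>" using qeq by blast
  then show ?thesis using tU hU hom qc by blast
qed


theorem proposition4p1:
  fixes ar :: "'f \<Rightarrow> nat" and T :: "'a topology" and F :: "'f \<Rightarrow> 'a list \<Rightarrow> 'a"
  assumes "top_algebra ar T F" and "Hausdorff_space T" and "compact_space T"
  shows "(simple_alg TYPE('a set) ar T F \<longleftrightarrow>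
           (\<forall>\<theta>. closed_congruence ar T F \<theta> \<longrightarrow>
                \<theta> = Id_on (topspace T) \<or> \<theta> = topspace T \<times> topspace T))
       \<and> ((\<forall>\<theta>. closed_congruence ar T F \<theta> \<longrightarrow>
                \<theta> = Id_on (topspace T) \<or> \<theta> = topspace T \<times> topspace T)
           \<longrightarrow> simple_alg TYPE('b) ar T F)"
proof -
  have fwd: "\<theta> = Id_on (topspace T) \<or> \<theta> = topspace T \<times> topspace T"
    if simp: "simple_alg TYPE('a set) ar T F" and cc: "closed_congruence ar T F \<theta>" for \<theta>
  proof (cases "\<theta> = topspace T \<times> topspace T")
    case True
    then show ?thesis by blast
  next
    case False
    have eq: "equiv (topspace T) \<theta>" using cc unfolding closed_congruence_def congruence_alg_def by blast
    have sub: "\<theta> \<subseteq> topspace T \<times> topspace T" using eq by (simp add: equiv_type)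
    obtain x y where xy: "x \<in> topspace T" "y \<in> topspace T" "(x,y) \<notin> \<theta>"
      using False sub by auto
    obtain U :: "'a set topology" and G h where
      UGh: "top_algebra ar U G" "Hausdorff_space U" "alg_hom ar T F U G h" "continuous_map T U h"
      and ker: "\<forall>x\<in>topspace T. \<forall>y\<in>topspace T. h x = h y \<longleftrightarrow> (x,y) \<in> \<theta>"
      using quot_alg[OF assms cc] by blast
    have nc: "\<exists>x\<in>topspace T. \<exists>y\<in>topspace T. h x \<noteq> h y"
      using xy ker by blast
    have S: "\<forall>(U :: 'a set topology) G h.
        top_algebra ar U G \<and> Hausdorff_space U \<and>
        alg_hom ar T F U G h \<and> continuous_map T U h \<and>
        (\<exists>x\<in>topspace T. \<exists>y\<in>topspace T. h x \<noteq> h y)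
        \<longrightarrow> inj_on h (topspace T)"
      using simp unfolding simple_alg_def by (elim conjE)
    have inj: "inj_on h (topspace T)"
      using S UGh nc by blast
    have "\<theta> = Id_on (topspace T)"
    proof
      show "\<theta> \<subseteq> Id_on (topspace T)"
      proof
        fix p assume p: "p \<in> \<theta>"
        then obtain a b where ab: "p = (a,b)" "a \<in> topspace T" "b \<in> topspace T" using sub by blast
        then have "h a = h b" using ker p by blast
        then have "a = b" using inj ab unfolding inj_on_def by blast
        then show "p \<in> Id_on (topspace T)" using ab by blast
      qed
      show "Id_on (topspace T) \<subseteq> \<theta>"
        using eq by (auto simp: equiv_def refl_on_def)
    qed
    then show ?thesis by blast
  qed
  have k1: "(\<forall>\<theta>. closed_congruence ar T F \<theta> \<longrightarrow>
                \<theta> = Id_on (topspace T) \<or> \<theta> = topspace T \<times> topspace T) \<Longrightarrow> simple_alg TYPE('a set) ar T F"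
    by (rule kernel_part[OF assms(1,2)])
  have k2: "(\<forall>\<theta>. closed_congruence ar T F \<theta> \<longrightarrow>
                \<theta> = Id_on (topspace T) \<or> \<theta> = topspace T \<times> topspace T) \<Longrightarrow> simple_alg TYPE('b) ar T F"
    by (rule kernel_part[OF assms(1,2)])
  show ?thesis
    using fwd k1 k2 by blast
qed

end
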